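(* Let $\mathcal A\in\mathbb Q^{n\times n\times n_3}$ with $\operatorname{Ind}_{QT}(\mathcal A)=k$, and let $\mathcal A^D\in\mathbb Q^{n\times n\times n_3}$ be its QT-Drazin inverse. Then $\mathtt{bcirc_z}(\mathcal A)^D=\mathtt{bcirc_z}(\mathcal A^D)$, where the left-hand side is the Drazin inverse of the quaternion matrix $\mathtt{bcirc_z}(\mathcal A)$.
   Context: $\mathbb Q$ denotes the real quaternions with the usual Hamilton multiplication; $\mathbb C$ is identified with $\{a_0+a_1\mathbf i\}$. Every quaternion array $A=A_0+A_1\mathbf i+A_2\mathbf j+A_3\mathbf k$ (real $A_t$) is written uniquely as $A=A_{\mathbf d}+\mathbf jA_{\mathbf c}$ with $A_{\mathbf d}=A_0+A_1\mathbf i$, $A_{\mathbf c}=A_2-A_3\mathbf i$. For $\mathcal A\in\mathbb Q^{n_1\times n_2\times n_3}$, $\mathcal A^{(s)}=\mathcal A(:,:,s)$. For a complex tensor $\mathcal C$, $\mathtt{bcirc}(\mathcal C)$ is the block circulant matrix with $(p,q)$ block $\mathcal C^{(((p-q)\bmod n_3)+1)}$. $P_{n_3}$ is the permutation matrix with first row $e_1^T$ and $r$-th row $e_{n_3+2-r}^T$ ($r\ge2$). $\mathtt{bcirc_z}(\mathcal A)=\mathtt{bcirc}(\mathcal A_{\mathbf d})+\mathbf j\,\mathtt{bcirc}(\mathcal A_{\mathbf c})(P_{n_3}\otimes I_{n_2})$. $\mathtt{unfold}(\mathcal B)=[\mathcal B^{(1)};\dots;\mathcal B^{(n_3)}]$,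 $\mathtt{fold}$ its inverse; QT-product $\mathcal A*_Q\mathcal B=\mathtt{fold}(\mathtt{bcirc_z}(\mathcal A)\mathtt{unfold}(\mathcal B))$; identity tensor $\mathcal I$: first frontal slice $I_n$, others zero; $\mathcal A^0=\mathcal I$, $\mathcal A^{k+1}=\mathcal A*_Q\mathcal A^k$. Conjugate transpose of a tensor: for complex $\mathcal C$, $\mathcal C^*$ has frontal slices $(\mathcal C^{(1)})^*$ and $(\mathcal C^{(n_3+2-s)})^*$ ($s\ge2$); $\mathcal A^*$ is defined by $\mathtt{unfold}(\mathcal A^* )=\mathtt{unfold}(\mathcal A_{\mathbf d}^* )-(P_{n_3}\otimes I_{n_2})\mathtt{unfold}(\mathcal A_{\mathbf c}^* )\mathbf j$; $\mathcal U$ is unitary if $\mathcal U^**_Q\mathcal U=\mathcal U*_Q\mathcal U^*=\mathcal I$. QT-rank: given a QT-SVD $\mathcal A=\mathcal U*_Q\mathcal S*_Q\mathcal V^*$ ($\mathcal U,\mathcal V$ unitary, every frontal slice of $\mathcal S$ diagonal), $\operatorname{rank}_{QT}(\mathcal A)=\#\{i\le\min(n_1,n_2):\|\mathcal S(i,i,:)\|_F>0\}$. QT-index $\operatorname{Ind}_{QT}(\mathcal A)$: least integer $k\ge0$ with $\operatorname{rank}_{QT}(\mathcal A^{k+1})=\operatorname{rank}_{QT}(\mathcal A^k)$. QT-Drazin inverse of $\mathcal A$ with $\operatorname{Ind}_{QT}(\mathcal A)=k$: a tensor $\mathcal X=\mathcal A^D$ with $\mathcal A^k*_Q\mathcal X*_Q\mathcal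 A=\mathcal A^k$, $\mathcal X*_Q\mathcal A*_Q\mathcal X=\mathcal X$, $\mathcal A*_Q\mathcal X=\mathcal X*_Q\mathcal A$. For a square quaternion matrix $M$, $\operatorname{Ind}(M)$ is the least $m\ge0$ with $\operatorname{rank}(M^{m+1})=\operatorname{rank}(M^m)$, and its Drazin inverse $M^D$ is the unique $X$ with $M^mXM=M^m$ ($m=\operatorname{Ind}(M)$), $XMX=X$, $MX=XM$. *)

theory Defs
  imports Complex_Main "Jordan_Normal_Form.Matrix"
begin

datatype quat = Quat (qre: real) (qi: real) (qj: real) (qk: real)

lemma quat_eq_iff: "x = y \<longleftrightarrow> qre x = qre y \<and> qi x = qi y \<and> qj x = qj y \<and> qk x = qk y"
  by (cases x; cases y) auto

instantiation quat :: ring_1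
begin
definition "0 = Quat 0 0 0 0"
definition "1 = Quat 1 0 0 0"
definition "x + y = Quat (qre x + qre y) (qi x + qi y) (qj x + qj y) (qk x + qk y)"
definition "x - y = Quat (qre x - qre y) (qi x - qi y) (qj x - qj y) (qk x - qk y)"
definition "- x = Quat (- qre x) (- qi x) (- qj x) (- qk x)"
definition "x * y = Quat
   (qre x * qre y - qi x * qi y - qj x * qj y - qk x * qk y)
   (qre x * qi y + qi x * qre y + qj x * qk y - qk x * qj y)
   (qre x * qj y - qi x * qk y + qj x * qre y + qk x * qi y)
   (qre x * qk y + qi x * qj y - qj x * qi y + qk x * qre y)"
instance
  by standard (auto simp: quat_eq_iff zero_quat_def one_quat_def plus_quat_def
      minus_quat_def uminus_quat_def times_quat_def algebra_simps)
end

definition quat_i :: quat where "quat_i = Quat 0 1 0 0"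
definition quat_j :: quat where "quat_j = Quat 0 0 1 0"

definition of_cpx :: "complex \<Rightarrow> quat" where
  "of_cpx z = Quat (Re z) (Im z) 0 0"

definition qnorm2 :: "quat \<Rightarrow> real" where
  "qnorm2 q = (qre q)\<^sup>2 + (qi q)\<^sup>2 + (qj q)\<^sup>2 + (qk q)\<^sup>2"

definition right_indep_cols :: "quat mat \<Rightarrow> nat set \<Rightarrow> bool" where
  "right_indep_cols M S \<longleftrightarrow> S \<subseteq> {..<dim_col M} \<and>
     (\<forall>c :: nat \<Rightarrow> quat. (\<forall>i<dim_row M. (\<Sum>j\<in>S. M $$ (i, j) * c j) = 0) \<longrightarrow> (\<forall>j\<in>S. c j = 0))"

definition qmat_rank :: "quat mat \<Rightarrow> nat" where
  "qmat_rank M = Max (card ` {S. right_indep_cols M S})"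

definition qmat_ind :: "quat mat \<Rightarrow> nat" where
  "qmat_ind M = (LEAST m. qmat_rank (M ^\<^sub>m (m + 1)) = qmat_rank (M ^\<^sub>m m))"

definition qmat_drazin :: "quat mat \<Rightarrow> quat mat" where
  "qmat_drazin M = (THE X. X \<in> carrier_mat (dim_row M) (dim_row M) \<and>
      M ^\<^sub>m (qmat_ind M) * X * M = M ^\<^sub>m (qmat_ind M) \<and>
      X * M * X = X \<and> M * X = X * M)"

text \<open>A tensor of size \<open>n1 \<times> n2 \<times> n3\<close> is a function of 0-based indices
  \<open>(i, j, s)\<close>, \<open>s\<close> indexing frontal slices, vanishing outside the index box.\<close>
type_synonym 'a tensor = "nat \<Rightarrow> nat \<Rightarrow> nat \<Rightarrow> 'a"

definition tensor_carrier :: "nat \<Rightarrow> nat \<Rightarrow> nat \<Rightarrow> 'a::zero tensor set" where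
  "tensor_carrier n1 n2 n3 = {A. \<forall>i j s. A i j s \<noteq> 0 \<longrightarrow> i < n1 \<and> j < n2 \<and> s < n3}"

text \<open>\<open>A = A_d + j A_c\<close>, \<open>A_d = A0 + A1 i\<close>, \<open>A_c = A2 - A3 i\<close>.\<close>
definition tpart_d :: "quat tensor \<Rightarrow> complex tensor" where
  "tpart_d A = (\<lambda>i j s. Complex (qre (A i j s)) (qi (A i j s)))"
definition tpart_c :: "quat tensor \<Rightarrow> complex tensor" where
  "tpart_c A = (\<lambda>i j s. Complex (qj (A i j s)) (- qk (A i j s)))"

definition cpx_tensor :: "complex tensor \<Rightarrow> quat tensor" where
  "cpx_tensor C = (\<lambda>i j s. of_cpx (C i j s))"

definition bcirc :: "nat \<Rightarrow> nat \<Rightarrow> nat \<Rightarrow> 'a tensor \<Rightarrow> 'a mat" where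
  "bcirc n1 n2 n3 C = mat (n1 * n3) (n2 * n3)
     (\<lambda>(r, c). C (r mod n1) (c mod n2) (nat ((int (r div n1) - int (c div n2)) mod int n3)))"

text \<open>\<open>P_{n3} \<otimes> I_m\<close>: \<open>P\<close> has first row \<open>e_1\<close> and \<open>r\<close>-th row \<open>e_{n3+2-r}\<close> (1-based),
  i.e. 0-based row \<open>r\<close> has its 1 in column \<open>(n3 - r) mod n3\<close>.\<close>
definition perm_P :: "nat \<Rightarrow> 'a::{zero,one} mat" where
  "perm_P n3 = mat n3 n3 (\<lambda>(r, c). if c = (n3 - r) mod n3 then 1 else 0)"

definition kron_I :: "'a::{zero,one} mat \<Rightarrow> nat \<Rightarrow> 'a mat" where
  "kron_I P m = mat (dim_row P * m) (dim_col P * m)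
     (\<lambda>(r, c). if r mod m = c mod m then P $$ (r div m, c div m) else 0)"

definition bcirc_z :: "nat \<Rightarrow> nat \<Rightarrow> nat \<Rightarrow> quat tensor \<Rightarrow> quat mat" where
  "bcirc_z n1 n2 n3 A =
     bcirc n1 n2 n3 (cpx_tensor (tpart_d A)) +
     quat_j \<cdot>\<^sub>m (bcirc n1 n2 n3 (cpx_tensor (tpart_c A)) * kron_I (perm_P n3) n2)"

definition tunfold :: "nat \<Rightarrow> nat \<Rightarrow> nat \<Rightarrow> 'a tensor \<Rightarrow> 'a mat" where
  "tunfold n1 n2 n3 B = mat (n1 * n3) n2 (\<lambda>(r, c). B (r mod n1) c (r div n1))"

definition tfold :: "nat \<Rightarrow> nat \<Rightarrow> nat \<Rightarrow> 'a::zero mat \<Rightarrow> 'a tensor" where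
  "tfold n1 n2 n3 M = (\<lambda>i j s. if i < n1 \<and> j < n2 \<and> s < n3 then M $$ (s * n1 + i, j) else 0)"

definition qt_prod :: "nat \<Rightarrow> nat \<Rightarrow> nat \<Rightarrow> nat \<Rightarrow> quat tensor \<Rightarrow> quat tensor \<Rightarrow> quat tensor" where
  "qt_prod n1 n2 n4 n3 A B = tfold n1 n4 n3 (bcirc_z n1 n2 n3 A * tunfold n2 n4 n3 B)"

definition qt_id :: "nat \<Rightarrow> nat \<Rightarrow> quat tensor" where
  "qt_id n n3 = (\<lambda>i j s. if i < n \<and> j < n \<and> s < n3 \<and> i = j \<and> s = 0 then 1 else 0)"

fun qt_pow :: "nat \<Rightarrow> nat \<Rightarrow> quat tensor \<Rightarrow> nat \<Rightarrow> quat tensor" where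
  "qt_pow n n3 A 0 = qt_id n n3"
| "qt_pow n n3 A (Suc k) = qt_prod n n n n3 A (qt_pow n n3 A k)"

definition ctens_ct :: "nat \<Rightarrow> nat \<Rightarrow> nat \<Rightarrow> complex tensor \<Rightarrow> complex tensor" where
  "ctens_ct n1 n2 n3 C = (\<lambda>i j s. if i < n2 \<and> j < n1 \<and> s < n3
       then cnj (C j i ((n3 - s) mod n3)) else 0)"

definition qt_ct :: "nat \<Rightarrow> nat \<Rightarrow> nat \<Rightarrow> quat tensor \<Rightarrow> quat tensor" where
  "qt_ct n1 n2 n3 A = tfold n2 n1 n3
     (tunfold n2 n1 n3 (cpx_tensor (ctens_ct n1 n2 n3 (tpart_d A)))
      - map_mat (\<lambda>x. x * quat_j)
          (kron_I (perm_P n3) n2 * tunfold n2 n1 n3 (cpx_tensor (ctens_ct n1 n2 n3 (tpart_c A)))))"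

definition qt_unitary :: "nat \<Rightarrow> nat \<Rightarrow> quat tensor \<Rightarrow> bool" where
  "qt_unitary n n3 U \<longleftrightarrow> U \<in> tensor_carrier n n n3 \<and>
     qt_prod n n n n3 (qt_ct n n n3 U) U = qt_id n n3 \<and>
     qt_prod n n n n3 U (qt_ct n n n3 U) = qt_id n n3"

definition is_QT_SVD :: "nat \<Rightarrow> nat \<Rightarrow> nat \<Rightarrow> quat tensor \<Rightarrow> quat tensor \<Rightarrow> quat tensor \<Rightarrow> quat tensor \<Rightarrow> bool" where
  "is_QT_SVD n1 n2 n3 A U S V \<longleftrightarrow>
     qt_unitary n1 n3 U \<and> qt_unitary n2 n3 V \<and>
     S \<in> tensor_carrier n1 n2 n3 \<and> (\<forall>i j s. i \<noteq> j \<longrightarrow> S i j s = 0) \<and>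
     A = qt_prod n1 n2 n2 n3 (qt_prod n1 n1 n2 n3 U S) (qt_ct n2 n2 n3 V)"

definition qt_rank :: "nat \<Rightarrow> nat \<Rightarrow> nat \<Rightarrow> quat tensor \<Rightarrow> nat" where
  "qt_rank n1 n2 n3 A = (SOME r. \<exists>U S V. is_QT_SVD n1 n2 n3 A U S V \<and>
     r = card {i. i < min n1 n2 \<and> sqrt (\<Sum>s<n3. qnorm2 (S i i s)) > 0})"

definition qt_ind :: "nat \<Rightarrow> nat \<Rightarrow> quat tensor \<Rightarrow> nat" where
  "qt_ind n n3 A = (LEAST k. qt_rank n n n3 (qt_pow n n3 A (k + 1)) = qt_rank n n n3 (qt_pow n n3 A k))"

definition is_qt_drazin :: "nat \<Rightarrow> nat \<Rightarrow> nat \<Rightarrow> quat tensor \<Rightarrow> quat tensor \<Rightarrow> bool" where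
  "is_qt_drazin n n3 k A X \<longleftrightarrow>
     qt_prod n n n n3 (qt_prod n n n n3 (qt_pow n n3 A k) X) A = qt_pow n n3 A k \<and>
     qt_prod n n n n3 (qt_prod n n n n3 X A) X = X \<and>
     qt_prod n n n n3 A X = qt_prod n n n n3 X A"

end

theory Submission
  imports Defs
begin

definition qinv :: "quat \<Rightarrow> quat" where
  "qinv q = Quat (qre q / qnorm2 q) (- qi q / qnorm2 q) (- qj q / qnorm2 q) (- qk q / qnorm2 q)"

lemma qnorm2_pos: "q \<noteq> 0 \<Longrightarrow> qnorm2 q > 0"
proof -
  assume "q \<noteq> 0"
  then have "qre q \<noteq> 0 \<or> qi q \<noteq> 0 \<or> qj q \<noteq> 0 \<or> qk q \<noteq> 0"
    by (auto simp: quat_eq_iff zero_quat_def)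
  then show ?thesis unfolding qnorm2_def
    by (auto simp: add_pos_nonneg add_nonneg_pos)
qed

lemma qinv_right: "q \<noteq> 0 \<Longrightarrow> q * qinv q = 1"
proof -
  assume q: "q \<noteq> 0"
  have p: "qnorm2 q \<noteq> 0" using qnorm2_pos[OF q] by simp
  define t where "t = inverse (qnorm2 q)"
  have qi': "qinv q = Quat (qre q * t) (- qi q * t) (- qj q * t) (- qk q * t)"
    unfolding qinv_def t_def by (simp add: divide_inverse)
  have r: "qre q * (qre q * t) + qi q * (qi q * t) + qj q * (qj q * t) + qk q * (qk q * t) = 1"
  proof -
    have "qre q * (qre q * t) + qi q * (qi q * t) + qj q * (qj q * t) + qk q * (qk q * t) = qnorm2 q * t"
      unfolding qnorm2_def by (simp add: power2_eq_square algebra_simps)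
    also have "\<dots> = 1" using p unfolding t_def by simp
    finally show ?thesis .
  qed
  show ?thesis unfolding qi'
    using r by (simp add: quat_eq_iff times_quat_def one_quat_def algebra_simps)
qed

lemma elim_exists:
  fixes c :: "nat \<Rightarrow> nat \<Rightarrow> quat"
  assumes "finite I" "finite J" "card I < card J"
  shows "\<exists>x. (\<forall>i\<in>I. (\<Sum>j\<in>J. c i j * x j) = 0) \<and> (\<exists>j\<in>J. x j \<noteq> 0)"
  using assms
proof (induction I arbitrary: J c rule: finite_induct)
  case empty
  then obtain j where "j \<in> J" by fastforce
  then show ?case by (intro exI[of _ "\<lambda>_. 1"]) auto
next
  case (insert i0 I)
  show ?case
  proof (cases "\<forall>j\<in>J. c i0 j = 0")
    case True
    from insert.IH[of J c] insert.prems insert.hyps obtain x where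
      x: "\<forall>i\<in>I. (\<Sum>j\<in>J. c i j * x j) = 0" "\<exists>j\<in>J. x j \<noteq> 0" by auto
    show ?thesis using x True by (intro exI[of _ x]) auto
  next
    case False
    then obtain j0 where j0: "j0 \<in> J" "c i0 j0 \<noteq> 0" by auto
    define J' where "J' = J - {j0}"
    define c' where "c' = (\<lambda>i j. c i j - c i j0 * qinv (c i0 j0) * c i0 j)"
    have cJ': "card I < card J'" using insert.prems insert.hyps j0 unfolding J'_def by auto
    from insert.IH[of J' c'] cJ' insert.prems obtain x' where
      x': "\<forall>i\<in>I. (\<Sum>j\<in>J'. c' i j * x' j) = 0" "\<exists>j\<in>J'. x' j \<noteq> 0"
      unfolding J'_def by auto
    define S where "S = (\<Sum>j\<in>J'. c i0 j * x' j)"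
    define x where "x = x'(j0 := - (qinv (c i0 j0) * S))"
    have fJ': "finite J'" using insert.prems unfolding J'_def by auto
    have j0J': "j0 \<notin> J'" unfolding J'_def by auto
    have split: "(\<Sum>j\<in>J. c i j * x j) = c i j0 * x j0 + (\<Sum>j\<in>J'. c i j * x' j)" for i
    proof -
      have "(\<Sum>j\<in>J. c i j * x j) = c i j0 * x j0 + (\<Sum>j\<in>J'. c i j * x j)"
        using insert.prems j0 unfolding J'_def by (simp add: sum.remove)
      also have "(\<Sum>j\<in>J'. c i j * x j) = (\<Sum>j\<in>J'. c i j * x' j)"
        using j0J' unfolding x_def by (intro sum.cong) auto
      finally show ?thesis .
    qed
    have e0: "(\<Sum>j\<in>J. c i0 j * x j) = 0"
    proof -
      have "c i0 j0 * x j0 = - (c i0 j0 * qinv (c i0 j0) * S)"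
        unfolding x_def by (simp add: mult.assoc)
      also have "\<dots> = - S" using qinv_right[OF j0(2)] by simp
      finally show ?thesis using split[of i0] unfolding S_def by simp
    qed
    have ei: "(\<Sum>j\<in>J. c i j * x j) = 0" if i: "i \<in> I" for i
    proof -
      have "0 = (\<Sum>j\<in>J'. c' i j * x' j)" using x'(1) i by auto
      also have "\<dots> = (\<Sum>j\<in>J'. c i j * x' j) - (\<Sum>j\<in>J'. c i j0 * qinv (c i0 j0) * (c i0 j * x' j))"
        unfolding c'_def by (simp add: algebra_simps sum_subtractf)
      also have "(\<Sum>j\<in>J'. c i j0 * qinv (c i0 j0) * (c i0 j * x' j)) = c i j0 * qinv (c i0 j0) * S"
        unfolding S_def by (simp add: sum_distrib_left)
      finally have "(\<Sum>j\<in>J'. c i j * x' j) = c i j0 * qinv (c i0 j0) * S" by simp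
      moreover have "c i j0 * x j0 = - (c i j0 * qinv (c i0 j0) * S)"
        unfolding x_def by (simp add: mult.assoc)
      ultimately show ?thesis using split[of i] by simp
    qed
    have nz: "\<exists>j\<in>J. x j \<noteq> 0" using x'(2) j0J' unfolding x_def J'_def by auto
    show ?thesis using e0 ei nz by (intro exI[of _ x]) auto
  qed
qed

definition lin_indep :: "nat \<Rightarrow> (nat \<Rightarrow> nat \<Rightarrow> quat) \<Rightarrow> nat set \<Rightarrow> bool" where
  "lin_indep N V J \<longleftrightarrow> (\<forall>x. (\<forall>r<N. (\<Sum>j\<in>J. V j r * x j) = 0) \<longrightarrow> (\<forall>j\<in>J. x j = 0))"

definition in_span :: "nat \<Rightarrow> (nat \<Rightarrow> nat \<Rightarrow> quat) \<Rightarrow> nat set \<Rightarrow> (nat \<Rightarrow> quat) \<Rightarrow> bool" where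
  "in_span N V I w \<longleftrightarrow> (\<exists>c. \<forall>r<N. w r = (\<Sum>i\<in>I. V i r * c i))"

lemma steinitz:
  assumes fI: "finite I" and fJ: "finite J" and ind: "lin_indep N W J"
    and sp: "\<forall>j\<in>J. in_span N V I (W j)"
  shows "card J \<le> card I"
proof (rule ccontr)
  assume "\<not> card J \<le> card I"
  then have lt: "card I < card J" by simp
  obtain C where C: "\<forall>j\<in>J. \<forall>r<N. W j r = (\<Sum>i\<in>I. V i r * C j i)"
    using bchoice[OF sp[unfolded in_span_def]] by blast
  from elim_exists[OF fI fJ lt, of "\<lambda>i j. C j i"] obtain x where
    x: "\<forall>i\<in>I. (\<Sum>j\<in>J. C j i * x j) = 0" "\<exists>j\<in>J. x j \<noteq> 0" by blast
  have "(\<Sum>j\<in>J. W j r * x j) = 0" if r: "r < N" for r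
  proof -
    have "(\<Sum>j\<in>J. W j r * x j) = (\<Sum>j\<in>J. (\<Sum>i\<in>I. V i r * C j i) * x j)"
      using C r by (intro sum.cong) auto
    also have "\<dots> = (\<Sum>j\<in>J. \<Sum>i\<in>I. V i r * (C j i * x j))"
      by (simp add: sum_distrib_right mult.assoc)
    also have "\<dots> = (\<Sum>i\<in>I. \<Sum>j\<in>J. V i r * (C j i * x j))"
      by (rule sum.swap)
    also have "\<dots> = (\<Sum>i\<in>I. V i r * (\<Sum>j\<in>J. C j i * x j))"
      by (simp add: sum_distrib_left)
    also have "\<dots> = 0" using x(1) by simp
    finally show ?thesis .
  qed
  then have "\<forall>j\<in>J. x j = 0" using ind unfolding lin_indep_def by blast
  then show False using x(2) by blast
qed

lemma span_trans:
  assumes fL: "finite L" and U: "\<forall>l\<in>L. in_span N V I (U l)" and w: "in_span N U L w"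
  shows "in_span N V I w"
proof -
  obtain C where C: "\<forall>l\<in>L. \<forall>r<N. U l r = (\<Sum>i\<in>I. V i r * C l i)"
    using bchoice[OF U[unfolded in_span_def]] by blast
  from w obtain d where d: "\<forall>r<N. w r = (\<Sum>l\<in>L. U l r * d l)"
    unfolding in_span_def by blast
  have "w r = (\<Sum>i\<in>I. V i r * (\<Sum>l\<in>L. C l i * d l))" if r: "r < N" for r
  proof -
    have "w r = (\<Sum>l\<in>L. (\<Sum>i\<in>I. V i r * C l i) * d l)"
      using C d r by (auto intro: sum.cong)
    also have "\<dots> = (\<Sum>l\<in>L. \<Sum>i\<in>I. V i r * (C l i * d l))"
      by (simp add: sum_distrib_right mult.assoc)
    also have "\<dots> = (\<Sum>i\<in>I. \<Sum>l\<in>L. V i r * (C l i * d l))"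
      by (rule sum.swap)
    also have "\<dots> = (\<Sum>i\<in>I. V i r * (\<Sum>l\<in>L. C l i * d l))"
      by (simp add: sum_distrib_left)
    finally show ?thesis .
  qed
  then show ?thesis unfolding in_span_def
    by (intro exI[of _ "\<lambda>i. \<Sum>l\<in>L. C l i * d l"]) auto
qed

definition colf :: "quat mat \<Rightarrow> nat \<Rightarrow> nat \<Rightarrow> quat" where
  "colf M j r = M $$ (r, j)"

lemma right_indep_cols_iff:
  "right_indep_cols M S \<longleftrightarrow> S \<subseteq> {..<dim_col M} \<and> lin_indep (dim_row M) (colf M) S"
  unfolding right_indep_cols_def lin_indep_def colf_def by simp

lemma indep_finite: "finite {S. right_indep_cols M S}"
proof -
  have "{S. right_indep_cols M S} \<subseteq> Pow {..<dim_col M}"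
    unfolding right_indep_cols_def by auto
  then show ?thesis by (rule finite_subset) auto
qed

lemma indep_empty: "right_indep_cols M {}"
  unfolding right_indep_cols_def by simp

lemma rank_ge: "right_indep_cols M S \<Longrightarrow> card S \<le> qmat_rank M"
  unfolding qmat_rank_def using indep_finite[of M] by (intro Max_ge) auto

lemma rank_obtain: "\<exists>S. right_indep_cols M S \<and> card S = qmat_rank M"
proof -
  have "qmat_rank M \<in> card ` {S. right_indep_cols M S}"
    unfolding qmat_rank_def using indep_finite[of M] indep_empty[of M]
    by (intro Max_in) auto
  then show ?thesis by auto
qed

lemma indep_fin: "right_indep_cols M S \<Longrightarrow> finite S"
  unfolding right_indep_cols_def using finite_subset by blast

lemma max_spans:
  assumes S: "right_indep_cols M S" "card S = qmat_rank M" and j: "j < dim_col M"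
  shows "in_span (dim_row M) (colf M) S (colf M j)"
proof (cases "j \<in> S")
  case True
  have "colf M j r = (\<Sum>i\<in>S. colf M i r * (if i = j then 1 else 0))" for r
    using True indep_fin[OF S(1)] by (simp add: if_distrib sum.delta cong: if_cong)
  then show ?thesis unfolding in_span_def by (intro exI[of _ "\<lambda>i. if i = j then 1 else 0"]) simp
next
  case False
  have fS: "finite S" using indep_fin[OF S(1)] .
  have "\<not> right_indep_cols M (insert j S)"
  proof
    assume "right_indep_cols M (insert j S)"
    from rank_ge[OF this] have "card (insert j S) \<le> qmat_rank M" .
    then show False using False fS S(2) by simp
  qed
  then have "\<not> lin_indep (dim_row M) (colf M) (insert j S)"
    using S(1) j unfolding right_indep_cols_iff by auto
  then obtain x where x: "\<forall>r<dim_row M. (\<Sum>i\<in>insert j S. colf M i r * x i) = 0"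
    and nz: "\<exists>i\<in>insert j S. x i \<noteq> 0"
    unfolding lin_indep_def by blast
  have sum_ins: "(\<Sum>i\<in>insert j S. colf M i r * x i) = colf M j r * x j + (\<Sum>i\<in>S. colf M i r * x i)" for r
    using fS False by simp
  have xj: "x j \<noteq> 0"
  proof
    assume "x j = 0"
    then have "\<forall>r<dim_row M. (\<Sum>i\<in>S. colf M i r * x i) = 0" using x sum_ins by simp
    then have "\<forall>i\<in>S. x i = 0" using S(1) unfolding right_indep_cols_iff lin_indep_def by blast
    then show False using nz \<open>x j = 0\<close> by auto
  qed
  have "colf M j r = (\<Sum>i\<in>S. colf M i r * (- (x i * qinv (x j))))" if r: "r < dim_row M" for r
  proof -
    have e0: "colf M j r * x j + (\<Sum>i\<in>S. colf M i r * x i) = 0"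
      using x r sum_ins[of r] by simp
    have e: "colf M j r * x j = - (\<Sum>i\<in>S. colf M i r * x i)"
      using e0 by (subst eq_neg_iff_add_eq_0)
    have "colf M j r = colf M j r * x j * qinv (x j)"
      using qinv_right[OF xj] by (simp add: mult.assoc)
    also have "\<dots> = - (\<Sum>i\<in>S. colf M i r * x i) * qinv (x j)" using e by simp
    also have "\<dots> = (\<Sum>i\<in>S. colf M i r * (- (x i * qinv (x j))))"
      by (simp add: sum_distrib_right mult.assoc sum_negf)
    finally show ?thesis .
  qed
  then show ?thesis unfolding in_span_def
    by (intro exI[of _ "\<lambda>i. - (x i * qinv (x j))"]) auto
qed

lemma mult_entry:
  assumes "A \<in> carrier_mat a b" "B \<in> carrier_mat b c" "i < a" "j < c"
  shows "(A * B) $$ (i, j) = (\<Sum>t<b. A $$ (i, t) * B $$ (t, j))"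
  using assms by (simp add: scalar_prod_def atLeast0LessThan)

lemma col_in_span_all:
  assumes P: "P \<in> carrier_mat a b" and Q: "Q \<in> carrier_mat b c" and j: "j < c"
  shows "in_span a (colf P) {..<b} (colf (P * Q) j)"
  unfolding in_span_def
  by (intro exI[of _ "\<lambda>l. Q $$ (l, j)"]) (simp add: colf_def mult_entry[OF P Q _ j])

lemma rank_mult_le:
  assumes P: "P \<in> carrier_mat a b" and Q: "Q \<in> carrier_mat b c"
  shows "qmat_rank (P * Q) \<le> qmat_rank P"
proof -
  obtain T where T: "right_indep_cols (P * Q) T" "card T = qmat_rank (P * Q)"
    using rank_obtain by blast
  obtain S where S: "right_indep_cols P S" "card S = qmat_rank P"
    using rank_obtain by blast
  have PQ: "P * Q \<in> carrier_mat a c" using P Q by simp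
  have sp: "\<forall>j\<in>T. in_span a (colf P) S (colf (P * Q) j)"
  proof
    fix j assume "j \<in> T"
    then have j: "j < c" using T(1) PQ Q unfolding right_indep_cols_def by auto
    have "\<forall>l\<in>{..<b}. in_span a (colf P) S (colf P l)"
      using max_spans[OF S] P by auto
    then show "in_span a (colf P) S (colf (P * Q) j)"
      by (rule span_trans[OF finite_lessThan _ col_in_span_all[OF P Q j]])
  qed
  have "card T \<le> card S"
    by (rule steinitz[OF indep_fin[OF S(1)] indep_fin[OF T(1)] _ sp])
      (use T(1) PQ in \<open>auto simp: right_indep_cols_iff\<close>)
  then show ?thesis using S T by simp
qed

lemma rank_eq_factor:
  assumes P: "P \<in> carrier_mat N N" and Q: "Q \<in> carrier_mat N N"
    and eq: "qmat_rank (P * Q) = qmat_rank P"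
  shows "\<exists>Z \<in> carrier_mat N N. P = P * Q * Z"
proof -
  obtain T where T: "right_indep_cols (P * Q) T" "card T = qmat_rank (P * Q)"
    using rank_obtain by blast
  obtain S where S: "right_indep_cols P S" "card S = qmat_rank P"
    using rank_obtain by blast
  have PQ: "P * Q \<in> carrier_mat N N" using P Q by simp
  have TN: "T \<subseteq> {..<N}" using T(1) PQ Q unfolding right_indep_cols_def by auto
  have fT: "finite T" using indep_fin[OF T(1)] .
  have fS: "finite S" using indep_fin[OF S(1)] .
  have Tind: "lin_indep N (colf (P * Q)) T" using T(1) PQ by (auto simp: right_indep_cols_iff)
  have spanS: "\<forall>l\<in>{..<N}. in_span N (colf P) S (colf P l)"
    using max_spans[OF S] P by auto
  have spT: "in_span N (colf (P * Q)) T (colf P x)" if x: "x < N" for x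
  proof (rule ccontr)
    assume nsp: "\<not> in_span N (colf (P * Q)) T (colf P x)"
    define W where "W = (\<lambda>j. if j = N then colf P x else colf (P * Q) j)"
    have NT: "N \<notin> T" using TN by auto
    have ind: "lin_indep N W (insert N T)"
      unfolding lin_indep_def
    proof (intro allI impI)
      fix y assume y: "\<forall>r<N. (\<Sum>j\<in>insert N T. W j r * y j) = 0"
      have sy: "(\<Sum>j\<in>insert N T. W j r * y j) = colf P x r * y N + (\<Sum>j\<in>T. colf (P * Q) j r * y j)" for r
      proof -
        have "(\<Sum>j\<in>insert N T. W j r * y j) = W N r * y N + (\<Sum>j\<in>T. W j r * y j)"
          using fT NT by simp
        also have "(\<Sum>j\<in>T. W j r * y j) = (\<Sum>j\<in>T. colf (P * Q) j r * y j)"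
          using NT unfolding W_def by (intro sum.cong) auto
        finally show ?thesis unfolding W_def by simp
      qed
      have yN: "y N = 0"
      proof (rule ccontr)
        assume yN: "y N \<noteq> 0"
        have "colf P x r = (\<Sum>j\<in>T. colf (P * Q) j r * (- (y j * qinv (y N))))" if r: "r < N" for r
        proof -
          have e0: "colf P x r * y N + (\<Sum>j\<in>T. colf (P * Q) j r * y j) = 0"
            using y r sy[of r] by simp
          have e: "colf P x r * y N = - (\<Sum>j\<in>T. colf (P * Q) j r * y j)"
            using e0 by (subst eq_neg_iff_add_eq_0)
          have "colf P x r = colf P x r * y N * qinv (y N)"
            using qinv_right[OF yN] by (simp add: mult.assoc)
          also have "\<dots> = - (\<Sum>j\<in>T. colf (P * Q) j r * y j) * qinv (y N)" using e by simp
          also have "\<dots> = (\<Sum>j\<in>T. colf (P * Q) j r * (- (y j * qinv (y N))))"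
            by (simp add: sum_distrib_right mult.assoc sum_negf)
          finally show ?thesis .
        qed
        then have "in_span N (colf (P * Q)) T (colf P x)" unfolding in_span_def
          by (intro exI[of _ "\<lambda>j. - (y j * qinv (y N))"]) auto
        then show False using nsp by simp
      qed
      have "\<forall>r<N. (\<Sum>j\<in>T. colf (P * Q) j r * y j) = 0" using y sy yN by simp
      then have "\<forall>j\<in>T. y j = 0" using Tind unfolding lin_indep_def by blast
      then show "\<forall>j\<in>insert N T. y j = 0" using yN by simp
    qed
    have spW: "\<forall>j\<in>insert N T. in_span N (colf P) S (W j)"
    proof
      fix j assume j: "j \<in> insert N T"
      show "in_span N (colf P) S (W j)"
      proof (cases "j = N")
        case True
        then show ?thesis unfolding W_def using spanS x by auto
      next
        case False
        then have jT: "j < N" using j TN by auto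
        have "in_span N (colf P) S (colf (P * Q) j)"
          by (rule span_trans[OF finite_lessThan spanS col_in_span_all[OF P Q jT]])
        then show ?thesis unfolding W_def using False by simp
      qed
    qed
    have "card (insert N T) \<le> card S"
      by (rule steinitz[OF fS _ ind spW]) (use fT in simp)
    then show False using fT NT T(2) S(2) eq by simp
  qed
  obtain C where C: "\<forall>x\<in>{..<N}. \<forall>r<N. colf P x r = (\<Sum>j\<in>T. colf (P * Q) j r * C x j)"
    using bchoice[of "{..<N}" "\<lambda>x c. \<forall>r<N. colf P x r = (\<Sum>j\<in>T. colf (P * Q) j r * c j)"]
      spT unfolding in_span_def by blast
  define Z where "Z = mat N N (\<lambda>(j, x). if j \<in> T then C x j else 0)"
  have Z: "Z \<in> carrier_mat N N" unfolding Z_def by simp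
  have "P = P * Q * Z"
  proof (rule eq_matI)
    fix r x assume r: "r < dim_row (P * Q * Z)" and x: "x < dim_col (P * Q * Z)"
    then have r: "r < N" and x: "x < N" using PQ Z by auto
    have "(P * Q * Z) $$ (r, x) = (\<Sum>j<N. (P * Q) $$ (r, j) * Z $$ (j, x))"
      by (rule mult_entry[OF PQ Z r x])
    also have "\<dots> = (\<Sum>j\<in>T. (P * Q) $$ (r, j) * C x j)"
    proof -
      have "(\<Sum>j<N. (P * Q) $$ (r, j) * Z $$ (j, x)) = (\<Sum>j\<in>T. (P * Q) $$ (r, j) * Z $$ (j, x))"
        using TN x unfolding Z_def by (intro sum.mono_neutral_right) auto
      also have "\<dots> = (\<Sum>j\<in>T. (P * Q) $$ (r, j) * C x j)"
        using TN x unfolding Z_def by (intro sum.cong) auto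
      finally show ?thesis .
    qed
    also have "\<dots> = P $$ (r, x)" using C r x unfolding colf_def by auto
    finally show "P $$ (r, x) = (P * Q * Z) $$ (r, x)" by simp
  qed (use P Q Z in auto)
  then show ?thesis using Z by blast
qed

context monoid
begin

lemma dz_pow_left:
  assumes a: "a \<in> carrier G" and x: "x \<in> carrier G"
    and ax: "a \<otimes> x = x \<otimes> a" and xax: "x \<otimes> a \<otimes> x = x"
  shows "x [^] (Suc j) \<otimes> a [^] j = x"
proof (induction j)
  case 0
  then show ?case using x by simp
next
  case (Suc j)
  have c: "a [^] j \<otimes> x = x \<otimes> a [^] j" using group_commutes_pow[OF ax a x] .
  have "x [^] Suc (Suc j) \<otimes> a [^] Suc j = x [^] Suc j \<otimes> ((x \<otimes> a [^] j) \<otimes> a)"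
    using a x by (simp add: m_assoc)
  also have "\<dots> = x [^] Suc j \<otimes> ((a [^] j \<otimes> x) \<otimes> a)"
    by (simp only: c)
  also have "\<dots> = (x [^] Suc j \<otimes> a [^] j) \<otimes> (x \<otimes> a)"
    using a x by (simp add: m_assoc)
  also have "\<dots> = x \<otimes> (a \<otimes> x)" using Suc a x by (simp add: ax)
  also have "\<dots> = x" using xax a x by (simp add: m_assoc)
  finally show ?case .
qed

lemma dz_pow_comm2:
  assumes a: "a \<in> carrier G" and x: "x \<in> carrier G" and ax: "a \<otimes> x = x \<otimes> a"
  shows "a [^] (i::nat) \<otimes> x [^] (j::nat) = x [^] j \<otimes> a [^] i"
proof -
  have "x \<otimes> a = a \<otimes> x" using ax by simp
  then have "x [^] j \<otimes> a = a \<otimes> x [^] j" using group_commutes_pow[OF _ x a] by blast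
  then have "a \<otimes> x [^] j = x [^] j \<otimes> a" by simp
  then show ?thesis using group_commutes_pow[OF _ a] x by blast
qed

lemma dz_unique:
  assumes a: "a \<in> carrier G" and x: "x \<in> carrier G" and y: "y \<in> carrier G"
    and ax: "a \<otimes> x = x \<otimes> a" and xax: "x \<otimes> a \<otimes> x = x" and kx: "a [^] (m::nat) \<otimes> x \<otimes> a = a [^] m"
    and ay: "a \<otimes> y = y \<otimes> a" and yay: "y \<otimes> a \<otimes> y = y" and ky: "a [^] m \<otimes> y \<otimes> a = a [^] m"
  shows "x = y"
proof -
  have x1: "x [^] (Suc m) \<otimes> a [^] m = x" by (rule dz_pow_left[OF a x ax xax])
  have y1: "y [^] (Suc m) \<otimes> a [^] m = y" by (rule dz_pow_left[OF a y ay yay])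
  have y2: "a [^] m \<otimes> y [^] (Suc m) = y"
    using y1 dz_pow_comm2[OF a y ay, of m "Suc m"] by simp
  have cxm: "a [^] m \<otimes> x = x \<otimes> a [^] m" using group_commutes_pow[OF ax a x] .
  have am: "a [^] m = x \<otimes> a \<otimes> a [^] m"
  proof -
    have "a [^] m = a [^] m \<otimes> x \<otimes> a" using kx by simp
    also have "\<dots> = x \<otimes> (a [^] m \<otimes> a)" using cxm a x by (simp add: m_assoc)
    also have "a [^] m \<otimes> a = a \<otimes> a [^] m"
      using nat_pow_Suc2[OF a, of m] by simp
    finally show ?thesis using a x by (simp add: m_assoc)
  qed
  have "x = x [^] (Suc m) \<otimes> (a [^] m \<otimes> y \<otimes> a)" using x1 ky by simp
  also have "\<dots> = (x [^] (Suc m) \<otimes> a [^] m) \<otimes> (a \<otimes> y)"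
    using a x y by (simp add: m_assoc ay)
  also have "\<dots> = x \<otimes> a \<otimes> y" using x1 a x y by (simp add: m_assoc)
  finally have ex: "x = x \<otimes> a \<otimes> y" .
  have "y = (x \<otimes> a \<otimes> a [^] m) \<otimes> y [^] (Suc m)" using y2 am by simp
  also have "\<dots> = x \<otimes> a \<otimes> (a [^] m \<otimes> y [^] (Suc m))"
    using a x y by (simp add: m_assoc)
  also have "\<dots> = x \<otimes> a \<otimes> y" using y2 by simp
  finally show ?thesis using ex by simp
qed

lemma dz_shift:
  assumes a: "a \<in> carrier G" and y: "y \<in> carrier G"
    and ay: "a \<otimes> y = y \<otimes> a" and ky: "a [^] (k::nat) \<otimes> y \<otimes> a = a [^] k"
  shows "a [^] k = a [^] (Suc k) \<otimes> y"
  using ky a y by (simp add: m_assoc ay)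

lemma dz_lower:
  assumes a: "a \<in> carrier G" and y: "y \<in> carrier G" and z: "z \<in> carrier G"
    and ay: "a \<otimes> y = y \<otimes> a" and ky: "a [^] (k::nat) \<otimes> y \<otimes> a = a [^] k"
    and mz: "a [^] (m::nat) = a [^] (Suc m) \<otimes> z" and mk: "m \<le> k"
  shows "a [^] m \<otimes> y \<otimes> a = a [^] m"
proof -
  have ex: "\<exists>w\<in>carrier G. a [^] m = a [^] (m + j) \<otimes> w" for j
  proof (induction j)
    case 0
    then show ?case using a by (intro bexI[of _ \<one>]) auto
  next
    case (Suc j)
    then obtain w where w: "w \<in> carrier G" "a [^] m = a [^] (m + j) \<otimes> w" by blast
    have pm: "a [^] (m + j) = a [^] j \<otimes> a [^] m"
      using nat_pow_mult[OF a, of j m] by (simp add: add.commute)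
    have e: "m + Suc j = j + Suc m" by simp
    have "a [^] m = a [^] (m + j) \<otimes> w" by (rule w(2))
    also have "\<dots> = (a [^] j \<otimes> a [^] m) \<otimes> w" by (simp only: pm)
    also have "\<dots> = a [^] j \<otimes> a [^] (Suc m) \<otimes> (z \<otimes> w)"
      using a z w by (subst mz) (simp add: m_assoc)
    also have "\<dots> = a [^] (m + Suc j) \<otimes> (z \<otimes> w)"
      by (simp only: e nat_pow_mult[OF a])
    finally show ?case using z w by blast
  qed
  from ex[of "k - m"] mk obtain w where w: "w \<in> carrier G" "a [^] m = a [^] k \<otimes> w" by auto
  have c1: "a \<otimes> (y \<otimes> a) = (y \<otimes> a) \<otimes> a" using a y by (simp add: ay m_assoc[symmetric])
  have c: "a [^] m \<otimes> (y \<otimes> a) = (y \<otimes> a) \<otimes> a [^] m"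
    using group_commutes_pow[OF c1 a] a y by simp
  have "a [^] m \<otimes> y \<otimes> a = (y \<otimes> a) \<otimes> a [^] m" using c a y by (simp add: m_assoc)
  also have "\<dots> = (y \<otimes> a) \<otimes> a [^] k \<otimes> w" using w a y by (simp add: m_assoc)
  also have "(y \<otimes> a) \<otimes> a [^] k = a [^] k \<otimes> y \<otimes> a"
    using group_commutes_pow[OF c1 a, of k] a y by (simp add: m_assoc)
  finally show ?thesis using ky w by simp
qed

end

definition qd :: "quat \<Rightarrow> quat" where "qd q = Quat (qre q) (qi q) 0 0"
definition qjp :: "quat \<Rightarrow> quat" where "qjp q = Quat 0 0 (qj q) (qk q)"

lemma q_split: "q = qd q + qjp q"
  by (simp add: quat_eq_iff qd_def qjp_def plus_quat_def)

lemma qd_mult: "qd (x * y) = qd x * qd y + qjp x * qjp y"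
  by (simp add: quat_eq_iff qd_def qjp_def plus_quat_def times_quat_def)

lemma qjp_mult: "qjp (x * y) = qd x * qjp y + qjp x * qd y"
  by (simp add: quat_eq_iff qd_def qjp_def plus_quat_def times_quat_def)

lemma qd_add: "qd (x + y) = qd x + qd y"
  by (simp add: quat_eq_iff qd_def plus_quat_def)
lemma qjp_add: "qjp (x + y) = qjp x + qjp y"
  by (simp add: quat_eq_iff qjp_def plus_quat_def)
lemma qd_0[simp]: "qd 0 = 0" by (simp add: qd_def zero_quat_def)
lemma qjp_0[simp]: "qjp 0 = 0" by (simp add: qjp_def zero_quat_def)
lemma qd_1[simp]: "qd 1 = 1" by (simp add: qd_def one_quat_def)
lemma qjp_1[simp]: "qjp 1 = 0" by (simp add: qjp_def one_quat_def zero_quat_def)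
lemma qd_qd[simp]: "qd (qd x) = qd x" by (simp add: qd_def)
lemma qd_qjp[simp]: "qd (qjp x) = 0" by (simp add: qd_def qjp_def zero_quat_def)
lemma qjp_qd[simp]: "qjp (qd x) = 0" by (simp add: qd_def qjp_def zero_quat_def)
lemma qjp_qjp[simp]: "qjp (qjp x) = qjp x" by (simp add: qjp_def)

lemma qd_sum: "qd (sum f A) = (\<Sum>x\<in>A. qd (f x))"
  by (induction A rule: infinite_finite_induct) (auto simp: qd_add)
lemma qjp_sum: "qjp (sum f A) = (\<Sum>x\<in>A. qjp (f x))"
  by (induction A rule: infinite_finite_induct) (auto simp: qjp_add)

lemma qd_comb: "qd ((qd x + qjp y) * z) = qd x * qd z + qjp y * qjp z"
  by (simp add: qd_mult qd_add qjp_add)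
lemma qjp_comb: "qjp ((qd x + qjp y) * z) = qd x * qjp z + qjp y * qd z"
  by (simp add: qjp_mult qd_add qjp_add)

lemma sum_grid:
  fixes f :: "nat \<Rightarrow> 'a::comm_monoid_add"
  shows "(\<Sum>t<n * n3. f t) = (\<Sum>u<n3. \<Sum>e<n. f (u * n + e))"
proof -
  have "(\<Sum>t<n * n3. f t) = (\<Sum>u<n3. sum f {u * n..<u * n + n})"
    using sum.nat_group[of f n n3] by (simp add: mult.commute)
  also have "\<dots> = (\<Sum>u<n3. \<Sum>e<n. f (u * n + e))"
  proof (rule sum.cong[OF refl])
    fix u
    have "{u * n..<u * n + n} = (\<lambda>e. u * n + e) ` {..<n}"
    proof (rule Set.set_eqI)
      fix x
      show "x \<in> {u * n..<u * n + n} \<longleftrightarrow> x \<in> (\<lambda>e. u * n + e) ` {..<n}"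
      proof
        assume "x \<in> {u * n..<u * n + n}"
        then show "x \<in> (\<lambda>e. u * n + e) ` {..<n}"
          by (intro image_eqI[of _ _ "x - u * n"]) auto
      qed auto
    qed
    then show "sum f {u * n..<u * n + n} = (\<Sum>e<n. f (u * n + e))"
      by (simp add: sum.reindex)
  qed
  finally show ?thesis .
qed

lemma sum_shift_int:
  fixes F :: "int \<Rightarrow> 'a::comm_monoid_add" and n3 :: nat
  assumes per: "\<And>z. F (z mod int n3) = F z" and n3: "n3 > 0"
  shows "(\<Sum>u<n3. F (int u + c)) = (\<Sum>u<n3. F (int u))"
proof -
  define h where "h u = nat ((int u + c) mod int n3)" for u
  have hF: "F (int (h u)) = F (int u + c)" for u
    unfolding h_def using n3 per by simp
  have inj: "inj_on h {..<n3}"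
  proof
    fix x y assume x: "x \<in> {..<n3}" and y: "y \<in> {..<n3}" and e: "h x = h y"
    have nn: "0 \<le> (int x + c) mod int n3" "0 \<le> (int y + c) mod int n3" using n3 by simp_all
    then have "(int x + c) mod int n3 = (int y + c) mod int n3"
      using e unfolding h_def by (simp add: eq_nat_nat_iff)
    then have "((int x + c) mod int n3 - c) mod int n3 = ((int y + c) mod int n3 - c) mod int n3"
      by simp
    then have "int x mod int n3 = int y mod int n3"
      by (simp add: mod_diff_left_eq)
    then show "x = y" using x y by simp
  qed
  have sub: "h ` {..<n3} \<subseteq> {..<n3}"
    unfolding h_def using n3 by (auto simp: nat_less_iff)
  have im: "h ` {..<n3} = {..<n3}"
    by (rule endo_inj_surj[OF finite_lessThan sub inj])
  have "(\<Sum>u<n3. F (int u + c)) = (\<Sum>u<n3. F (int (h u)))" by (simp add: hF)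
  also have "\<dots> = (\<Sum>w\<in>h ` {..<n3}. F (int w))" by (simp add: sum.reindex[OF inj])
  also have "\<dots> = (\<Sum>u<n3. F (int u))" by (simp add: im)
  finally show ?thesis .
qed

lemma perm_eq:
  fixes p q n3 :: nat
  assumes "p < n3" "q < n3"
  shows "(q = (n3 - p) mod n3) \<longleftrightarrow> (p = (n3 - q) mod n3)"
proof (cases "p = 0")
  case True
  then show ?thesis using assms
    by (cases "q = 0") auto
next
  case False
  then have e: "(n3 - p) mod n3 = n3 - p" using assms by simp
  show ?thesis
  proof (cases "q = 0")
    case True
    then show ?thesis using False assms by simp
  next
    case q0: False
    then have "(n3 - q) mod n3 = n3 - q" using assms by simp
    then show ?thesis using e assms by auto
  qed
qed

lemma sub_plus:
  fixes p q n3 :: nat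
  assumes "q < n3"
  shows "nat ((int p - int ((n3 - q) mod n3)) mod int n3) = (p + q) mod n3"
proof (cases "q = 0")
  case True
  then show ?thesis by (simp add: nat_mod_as_int)
next
  case False
  then have e: "(n3 - q) mod n3 = n3 - q" using assms by simp
  have "(int p - int (n3 - q)) mod int n3 = (int (p + q) - int n3) mod int n3"
    using assms by (simp add: of_nat_diff algebra_simps)
  also have "\<dots> = int (p + q) mod int n3" by (simp add: mod_diff_right_eq[symmetric])
  finally show ?thesis using e by (simp add: nat_mod_as_int)
qed

lemma kron_entry:
  assumes t: "t < n * n3" and c: "c < n * n3"
  shows "kron_I (perm_P n3) n $$ (t, c) =
    (if t = ((n3 - c div n) mod n3) * n + c mod n then 1 else 0)"
proof -
  have n: "n > 0" using t by (cases n) auto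
  have td: "t div n < n3" using less_mult_imp_div_less[of t n3 n] t by (simp add: mult.commute)
  have cd: "c div n < n3" using less_mult_imp_div_less[of c n3 n] c by (simp add: mult.commute)
  have dims: "dim_row (perm_P n3 :: quat mat) = n3" "dim_col (perm_P n3 :: quat mat) = n3"
    unfolding perm_P_def by simp_all
  have "kron_I (perm_P n3) n $$ (t, c) =
     (if t mod n = c mod n then (if c div n = (n3 - t div n) mod n3 then 1 else 0) else 0)"
    unfolding kron_I_def using t c td cd dims by (simp add: perm_P_def mult.commute)
  also have "\<dots> = (if t = ((n3 - c div n) mod n3) * n + c mod n then 1 else 0)"
  proof -
    have "(t mod n = c mod n \<and> c div n = (n3 - t div n) mod n3) \<longleftrightarrow>
          t = ((n3 - c div n) mod n3) * n + c mod n"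
    proof
      assume h: "t mod n = c mod n \<and> c div n = (n3 - t div n) mod n3"
      then have "t div n = (n3 - c div n) mod n3" using perm_eq[OF td cd] by simp
      then show "t = ((n3 - c div n) mod n3) * n + c mod n"
        using h div_mult_mod_eq[of t n] by simp
    next
      assume h: "t = ((n3 - c div n) mod n3) * n + c mod n"
      have "t mod n = c mod n" using h by simp
      moreover have "t div n = (n3 - c div n) mod n3" using h n by simp
      ultimately show "t mod n = c mod n \<and> c div n = (n3 - t div n) mod n3"
        using perm_eq[OF td cd] by simp
    qed
    note eqv = this
    have e2: "(if P1 then (if P2 then 1 else 0) else (0::'b::{zero,one})) = (if P1 \<and> P2 then 1 else 0)" for P1 P2
      by simp
    show ?thesis unfolding e2 using eqv by (simp only:)
  qed
  finally show ?thesis .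
qed

lemma bcirc_entry:
  assumes "r < n1 * n3" "c < n2 * n3"
  shows "bcirc n1 n2 n3 C $$ (r, c) = C (r mod n1) (c mod n2) (nat ((int (r div n1) - int (c div n2)) mod int n3))"
  using assms unfolding bcirc_def by simp

lemma bz_entry:
  assumes r: "r < n * n3" and c: "c < n * n3"
  shows "bcirc_z n n n3 A $$ (r, c) =
     qd (A (r mod n) (c mod n) (nat ((int (r div n) - int (c div n)) mod int n3))) +
     qjp (A (r mod n) (c mod n) ((r div n + c div n) mod n3))"
proof -
  have n: "n > 0" using r by (cases n) auto
  have cd: "c div n < n3" using less_mult_imp_div_less[of c n3 n] c by (simp add: mult.commute)
  define u0 where "u0 = (n3 - c div n) mod n3"
  have u0: "u0 < n3" using cd unfolding u0_def by simp
  define t0 where "t0 = u0 * n + c mod n"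
  have t0: "t0 < n * n3"
  proof -
    have "t0 < u0 * n + n" unfolding t0_def using n by simp
    also have "\<dots> \<le> n * n3" using u0 by (metis Suc_leI mult.commute mult_Suc mult_le_mono2 add.commute)
    finally show ?thesis .
  qed
  define Cc where "Cc = cpx_tensor (tpart_c A)"
  define D where "D = cpx_tensor (tpart_d A)"
  define K where "K = (kron_I (perm_P n3) n :: quat mat)"
  have K: "K \<in> carrier_mat (n * n3) (n * n3)"
    unfolding K_def kron_I_def perm_P_def by (simp add: mult.commute)
  have B: "bcirc n n n3 Cc \<in> carrier_mat (n * n3) (n * n3)" unfolding bcirc_def by simp
  have "(bcirc n n n3 Cc * K) $$ (r, c) = (\<Sum>t<n * n3. bcirc n n n3 Cc $$ (r, t) * K $$ (t, c))"
    by (rule mult_entry[OF B K r c])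
  also have "\<dots> = (\<Sum>t<n * n3. if t = t0 then bcirc n n n3 Cc $$ (r, t) else 0)"
    by (rule sum.cong[OF refl]) (simp add: K_def kron_entry[OF _ c] t0_def u0_def)
  also have "\<dots> = bcirc n n n3 Cc $$ (r, t0)" using t0 by simp
  also have "\<dots> = Cc (r mod n) (c mod n) ((r div n + c div n) mod n3)"
    using r t0 n cd unfolding t0_def u0_def
    by (simp add: bcirc_entry sub_plus)
  finally have e: "(bcirc n n n3 Cc * K) $$ (r, c) = Cc (r mod n) (c mod n) ((r div n + c div n) mod n3)" .
  have j: "quat_j * Cc a b s = qjp (A a b s)" for a b s
    unfolding Cc_def cpx_tensor_def tpart_c_def of_cpx_def quat_j_def qjp_def
    by (simp add: quat_eq_iff times_quat_def)
  have d: "D a b s = qd (A a b s)" for a b s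
    unfolding D_def cpx_tensor_def tpart_d_def of_cpx_def qd_def by simp
  have "bcirc_z n n n3 A $$ (r, c) = bcirc n n n3 D $$ (r, c) + quat_j * (bcirc n n n3 Cc * K) $$ (r, c)"
    unfolding bcirc_z_def D_def[symmetric] Cc_def[symmetric] K_def[symmetric]
    using r c K B by simp
  also have "\<dots> = qd (A (r mod n) (c mod n) (nat ((int (r div n) - int (c div n)) mod int n3))) +
     qjp (A (r mod n) (c mod n) ((r div n + c div n) mod n3))"
    using r c by (simp add: e j d bcirc_entry)
  finally show ?thesis .
qed

lemma bz_carrier: "bcirc_z n n n3 A \<in> carrier_mat (n * n3) (n * n3)"
proof -
  have "dim_row (kron_I (perm_P n3) n :: quat mat) = n * n3" "dim_col (kron_I (perm_P n3) n :: quat mat) = n * n3"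
    unfolding kron_I_def perm_P_def by (simp_all add: mult.commute)
  moreover have "dim_row (bcirc n n n3 C) = n * n3" "dim_col (bcirc n n n3 C) = n * n3" for C :: "quat tensor"
    unfolding bcirc_def by simp_all
  ultimately show ?thesis unfolding bcirc_z_def carrier_mat_def by simp
qed

definition per :: "nat \<Rightarrow> quat tensor \<Rightarrow> nat \<Rightarrow> nat \<Rightarrow> int \<Rightarrow> quat" where
  "per n3 A a b z = A a b (nat (z mod int n3))"

lemma per_mod_right: "per n3 A a b (x - y mod int n3) = per n3 A a b (x - y)"
  unfolding per_def by (simp add: mod_diff_right_eq)
lemma per_mod_plus_right: "per n3 A a b (x + y mod int n3) = per n3 A a b (x + y)"
  unfolding per_def by (simp add: mod_add_right_eq)
lemma per_mod: "per n3 A a b (y mod int n3) = per n3 A a b y"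
  unfolding per_def by simp
lemma per_nat: "u < n3 \<Longrightarrow> per n3 A a b (int u) = A a b u"
  unfolding per_def by simp

lemma bz_entry':
  assumes r: "r < n * n3" and c: "c < n * n3"
  shows "bcirc_z n n n3 A $$ (r, c) =
     qd (per n3 A (r mod n) (c mod n) (int (r div n) - int (c div n))) +
     qjp (per n3 A (r mod n) (c mod n) (int (r div n) + int (c div n)))"
  unfolding bz_entry[OF r c] per_def by (simp add: nat_mod_as_int)

lemma tunfold_carrier: "tunfold n2 n4 n3 B \<in> carrier_mat (n2 * n3) n4"
  unfolding tunfold_def by simp

lemma div_lt: "(t::nat) < n * n3 \<Longrightarrow> t div n < n3"
  using less_mult_imp_div_less[of t n3 n] by (simp add: mult.commute)

lemma grid_lt: "(u::nat) < n3 \<Longrightarrow> e < n \<Longrightarrow> u * n + e < n * n3"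
proof -
  assume u: "u < n3" and e: "e < n"
  have "u * n + e < u * n + n" using e by simp
  also have "\<dots> = Suc u * n" by simp
  also have "\<dots> \<le> n3 * n" using u by (intro mult_le_mono1) simp
  finally show ?thesis by (simp add: mult.commute)
qed

lemma qt_prod_entry:
  assumes i: "i < n" and j: "j < n" and s: "s < n3"
  shows "qt_prod n n n n3 A B i j s =
    (\<Sum>u<n3. \<Sum>e<n. (qd (per n3 A i e (int s - int u)) + qjp (per n3 A i e (int s + int u))) * B e j u)"
proof -
  have r: "s * n + i < n * n3" using grid_lt[OF s i] .
  have "qt_prod n n n n3 A B i j s = (bcirc_z n n n3 A * tunfold n n n3 B) $$ (s * n + i, j)"
    unfolding qt_prod_def tfold_def using i j s by simp
  also have "\<dots> = (\<Sum>t<n * n3. bcirc_z n n n3 A $$ (s * n + i, t) * tunfold n n n3 B $$ (t, j))"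
    by (rule mult_entry[OF bz_carrier tunfold_carrier r j])
  also have "\<dots> = (\<Sum>u<n3. \<Sum>e<n. bcirc_z n n n3 A $$ (s * n + i, u * n + e) * tunfold n n n3 B $$ (u * n + e, j))"
    by (rule sum_grid)
  also have "\<dots> = (\<Sum>u<n3. \<Sum>e<n. (qd (per n3 A i e (int s - int u)) + qjp (per n3 A i e (int s + int u))) * B e j u)"
  proof (intro sum.cong refl)
    fix u e assume u: "u \<in> {..<n3}" and e: "e \<in> {..<n}"
    have t: "u * n + e < n * n3" using grid_lt u e by simp
    show "bcirc_z n n n3 A $$ (s * n + i, u * n + e) * tunfold n n n3 B $$ (u * n + e, j) =
      (qd (per n3 A i e (int s - int u)) + qjp (per n3 A i e (int s + int u))) * B e j u"
      unfolding bz_entry'[OF r t] using i e j t unfolding tunfold_def by simp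
  qed
  finally show ?thesis .
qed

lemma per_qt_prod:
  assumes i: "i < n" and j: "j < n" and n3: "n3 > 0"
  shows "per n3 (qt_prod n n n n3 A B) i j z =
    (\<Sum>u<n3. \<Sum>e<n. (qd (per n3 A i e (z - int u)) + qjp (per n3 A i e (z + int u))) * B e j u)"
proof -
  define s where "s = nat (z mod int n3)"
  have s: "s < n3" unfolding s_def using n3 by (simp add: nat_less_iff)
  have zs: "int s = z mod int n3" unfolding s_def using n3 by simp
  have "per n3 (qt_prod n n n n3 A B) i j z = qt_prod n n n n3 A B i j s"
    unfolding per_def s_def by simp
  also have "\<dots> = (\<Sum>u<n3. \<Sum>e<n. (qd (per n3 A i e (int s - int u)) + qjp (per n3 A i e (int s + int u))) * B e j u)"
    by (rule qt_prod_entry[OF i j s])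
  also have "\<dots> = (\<Sum>u<n3. \<Sum>e<n. (qd (per n3 A i e (z - int u)) + qjp (per n3 A i e (z + int u))) * B e j u)"
  proof -
    have "per n3 A i e (int s - int u) = per n3 A i e (z - int u)" for e u
      unfolding zs per_def by (simp add: mod_diff_left_eq)
    moreover have "per n3 A i e (int s + int u) = per n3 A i e (z + int u)" for e u
      unfolding zs per_def by (simp add: mod_add_left_eq)
    ultimately show ?thesis by simp
  qed
  finally show ?thesis .
qed

lemma sum_shift_per:
  fixes G :: "int \<Rightarrow> quat"
  assumes per: "\<And>z. G (z mod int n3) = G z" and n3: "n3 > 0"
  shows "(\<Sum>u<n3. G (int u + c)) = (\<Sum>u<n3. G (int u))"
  by (rule sum_shift_int[of G n3 c, OF per n3])

lemma bz_mult:
  assumes n3: "n3 > 0"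
  shows "bcirc_z n n n3 (qt_prod n n n n3 A B) = bcirc_z n n n3 A * bcirc_z n n n3 B"
proof (rule eq_matI)
  let ?N = "n * n3"
  have cA: "bcirc_z n n n3 A \<in> carrier_mat ?N ?N" by (rule bz_carrier)
  have cB: "bcirc_z n n n3 B \<in> carrier_mat ?N ?N" by (rule bz_carrier)
  fix r c assume r0: "r < dim_row (bcirc_z n n n3 A * bcirc_z n n n3 B)"
    and c0: "c < dim_col (bcirc_z n n n3 A * bcirc_z n n n3 B)"
  then have r: "r < ?N" and c: "c < ?N" using cA cB by auto
  define a where "a = r mod n"
  define b where "b = c mod n"
  define P where "P = int (r div n)"
  define Q where "Q = int (c div n)"
  have n: "n > 0" using r by (cases n) auto
  have a: "a < n" and b: "b < n" unfolding a_def b_def using n by simp_all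
  define pA where "pA = per n3 A"
  define pB where "pB = per n3 B"
  define G1 where "G1 = (\<lambda>v. \<Sum>e<n. qd (pA a e (P - Q - v)) * qd (pB e b v))"
  define G2 where "G2 = (\<lambda>v. \<Sum>e<n. qd (pA a e (P + Q - v)) * qjp (pB e b v))"
  define G3 where "G3 = (\<lambda>v. \<Sum>e<n. qjp (pA a e (P + Q + v)) * qd (pB e b v))"
  define G4 where "G4 = (\<lambda>v. \<Sum>e<n. qjp (pA a e (P - Q + v)) * qjp (pB e b v))"
  have pG1: "G1 (z mod int n3) = G1 z" for z
    unfolding G1_def pA_def pB_def by (simp add: per_mod_right per_mod)
  have pG2: "G2 (z mod int n3) = G2 z" for z
    unfolding G2_def pA_def pB_def by (simp add: per_mod_right per_mod)
  have pG3: "G3 (z mod int n3) = G3 z" for z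
    unfolding G3_def pA_def pB_def by (simp add: per_mod_plus_right per_mod)
  have pG4: "G4 (z mod int n3) = G4 z" for z
    unfolding G4_def pA_def pB_def by (simp add: per_mod_plus_right per_mod)
  have BpB: "\<And>e u. u < n3 \<Longrightarrow> B e b u = pB e b (int u)"
    unfolding pB_def by (simp add: per_nat)
  have "bcirc_z n n n3 (qt_prod n n n n3 A B) $$ (r, c) =
      qd (per n3 (qt_prod n n n n3 A B) a b (P - Q)) + qjp (per n3 (qt_prod n n n n3 A B) a b (P + Q))"
    unfolding bz_entry'[OF r c] a_def b_def P_def Q_def ..
  also have "qd (per n3 (qt_prod n n n n3 A B) a b (P - Q)) = (\<Sum>u<n3. G1 (int u) + G4 (int u))"
  proof -
    have "qd (per n3 (qt_prod n n n n3 A B) a b (P - Q)) =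
       (\<Sum>u<n3. \<Sum>e<n. qd ((qd (pA a e (P - Q - int u)) + qjp (pA a e (P - Q + int u))) * B e b u))"
      unfolding per_qt_prod[OF a b n3] pA_def by (simp add: qd_sum)
    also have "\<dots> = (\<Sum>u<n3. \<Sum>e<n. qd (pA a e (P - Q - int u)) * qd (pB e b (int u)) + qjp (pA a e (P - Q + int u)) * qjp (pB e b (int u)))"
      by (intro sum.cong refl) (simp add: qd_comb BpB)
    also have "\<dots> = (\<Sum>u<n3. G1 (int u) + G4 (int u))"
      unfolding G1_def G4_def by (simp add: sum.distrib)
    finally show ?thesis .
  qed
  also have "qjp (per n3 (qt_prod n n n n3 A B) a b (P + Q)) = (\<Sum>u<n3. G2 (int u) + G3 (int u))"
  proof -
    have "qjp (per n3 (qt_prod n n n n3 A B) a b (P + Q)) =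
       (\<Sum>u<n3. \<Sum>e<n. qjp ((qd (pA a e (P + Q - int u)) + qjp (pA a e (P + Q + int u))) * B e b u))"
      unfolding per_qt_prod[OF a b n3] pA_def by (simp add: qjp_sum)
    also have "\<dots> = (\<Sum>u<n3. \<Sum>e<n. qd (pA a e (P + Q - int u)) * qjp (pB e b (int u)) + qjp (pA a e (P + Q + int u)) * qd (pB e b (int u)))"
      by (intro sum.cong refl) (simp add: qjp_comb BpB)
    also have "\<dots> = (\<Sum>u<n3. G2 (int u) + G3 (int u))"
      unfolding G2_def G3_def by (simp add: sum.distrib)
    finally show ?thesis .
  qed
  finally have L: "bcirc_z n n n3 (qt_prod n n n n3 A B) $$ (r, c) =
     (\<Sum>u<n3. G1 (int u) + G4 (int u)) + (\<Sum>u<n3. G2 (int u) + G3 (int u))" .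
  have "(bcirc_z n n n3 A * bcirc_z n n n3 B) $$ (r, c) =
      (\<Sum>t<?N. bcirc_z n n n3 A $$ (r, t) * bcirc_z n n n3 B $$ (t, c))"
    by (rule mult_entry[OF cA cB r c])
  also have "\<dots> = (\<Sum>u<n3. \<Sum>e<n. bcirc_z n n n3 A $$ (r, u * n + e) * bcirc_z n n n3 B $$ (u * n + e, c))"
    by (rule sum_grid)
  also have "\<dots> = (\<Sum>u<n3. G1 (int u - Q) + G2 (int u + Q) + G3 (int u - Q) + G4 (int u + Q))"
  proof (rule sum.cong[OF refl])
    fix u assume u: "u \<in> {..<n3}"
    have "(\<Sum>e<n. bcirc_z n n n3 A $$ (r, u * n + e) * bcirc_z n n n3 B $$ (u * n + e, c)) =
      (\<Sum>e<n. (qd (pA a e (P - int u)) + qjp (pA a e (P + int u))) *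
               (qd (pB e b (int u - Q)) + qjp (pB e b (int u + Q))))"
    proof (rule sum.cong[OF refl])
      fix e assume e: "e \<in> {..<n}"
      have t: "u * n + e < ?N" using grid_lt u e by simp
      show "bcirc_z n n n3 A $$ (r, u * n + e) * bcirc_z n n n3 B $$ (u * n + e, c) =
        (qd (pA a e (P - int u)) + qjp (pA a e (P + int u))) * (qd (pB e b (int u - Q)) + qjp (pB e b (int u + Q)))"
        unfolding bz_entry'[OF r t] bz_entry'[OF t c] a_def b_def P_def Q_def pA_def pB_def
        using e u by simp
    qed
    also have "\<dots> = (\<Sum>e<n. qd (pA a e (P - int u)) * qd (pB e b (int u - Q)) +
        qd (pA a e (P - int u)) * qjp (pB e b (int u + Q)) +
        qjp (pA a e (P + int u)) * qd (pB e b (int u - Q)) +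
        qjp (pA a e (P + int u)) * qjp (pB e b (int u + Q)))"
      by (simp add: distrib_left distrib_right add_ac)
    also have "\<dots> = G1 (int u - Q) + G2 (int u + Q) + G3 (int u - Q) + G4 (int u + Q)"
    proof -
      have h1: "P - Q - (int u - Q) = P - int u" and h2: "P + Q - (int u + Q) = P - int u"
        and h3: "P + Q + (int u - Q) = P + int u" and h4: "P - Q + (int u + Q) = P + int u"
        by simp_all
      show ?thesis unfolding G1_def G2_def G3_def G4_def h1 h2 h3 h4
        by (simp only: sum.distrib)
    qed
    finally show "(\<Sum>e<n. bcirc_z n n n3 A $$ (r, u * n + e) * bcirc_z n n n3 B $$ (u * n + e, c)) =
       G1 (int u - Q) + G2 (int u + Q) + G3 (int u - Q) + G4 (int u + Q)" .
  qed
  also have "\<dots> = (\<Sum>u<n3. G1 (int u + (- Q))) + (\<Sum>u<n3. G2 (int u + Q)) + (\<Sum>u<n3. G3 (int u + (- Q))) + (\<Sum>u<n3. G4 (int u + Q))"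
    by (simp only: sum.distrib diff_conv_add_uminus)
  also have "\<dots> = (\<Sum>u<n3. G1 (int u)) + (\<Sum>u<n3. G2 (int u)) + (\<Sum>u<n3. G3 (int u)) + (\<Sum>u<n3. G4 (int u))"
    by (simp only: sum_shift_per[of G1 n3, OF pG1 n3] sum_shift_per[of G2 n3, OF pG2 n3]
        sum_shift_per[of G3 n3, OF pG3 n3] sum_shift_per[of G4 n3, OF pG4 n3])
  finally have R: "(bcirc_z n n n3 A * bcirc_z n n n3 B) $$ (r, c) =
    (\<Sum>u<n3. G1 (int u)) + (\<Sum>u<n3. G2 (int u)) + (\<Sum>u<n3. G3 (int u)) + (\<Sum>u<n3. G4 (int u))" .
  show "bcirc_z n n n3 (qt_prod n n n n3 A B) $$ (r, c) = (bcirc_z n n n3 A * bcirc_z n n n3 B) $$ (r, c)"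
    unfolding L R by (simp only: sum.distrib add_ac)
next
  show "dim_row (bcirc_z n n n3 (qt_prod n n n n3 A B)) = dim_row (bcirc_z n n n3 A * bcirc_z n n n3 B)"
    by (simp only: index_mult_mat(2) carrier_matD[OF bz_carrier])
  show "dim_col (bcirc_z n n n3 (qt_prod n n n n3 A B)) = dim_col (bcirc_z n n n3 A * bcirc_z n n n3 B)"
    by (simp only: index_mult_mat(3) carrier_matD[OF bz_carrier])
qed

lemma bz_mult_all:
  "bcirc_z n n n3 (qt_prod n n n n3 A B) = bcirc_z n n n3 A * bcirc_z n n n3 B"
proof (cases "n3 = 0")
  case True
  show ?thesis
  proof (rule eq_matI)
    show "dim_row (bcirc_z n n n3 (qt_prod n n n n3 A B)) = dim_row (bcirc_z n n n3 A * bcirc_z n n n3 B)"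
      by (simp only: index_mult_mat(2) carrier_matD[OF bz_carrier])
    show "dim_col (bcirc_z n n n3 (qt_prod n n n n3 A B)) = dim_col (bcirc_z n n n3 A * bcirc_z n n n3 B)"
      by (simp only: index_mult_mat(3) carrier_matD[OF bz_carrier])
    fix i j assume "i < dim_row (bcirc_z n n n3 A * bcirc_z n n n3 B)"
    then have False using True by (simp only: index_mult_mat(2) carrier_matD[OF bz_carrier])
    then show "bcirc_z n n n3 (qt_prod n n n n3 A B) $$ (i, j) = (bcirc_z n n n3 A * bcirc_z n n n3 B) $$ (i, j)" ..
  qed
next
  case False
  then show ?thesis using bz_mult by simp
qed

lemma mod_zero_iff_eq:
  fixes p q n3 :: nat
  assumes "p < n3" "q < n3"
  shows "nat ((int p - int q) mod int n3) = 0 \<longleftrightarrow> p = q"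
proof
  assume h: "nat ((int p - int q) mod int n3) = 0"
  have n3: "n3 > 0" using assms by simp
  have "(int p - int q) mod int n3 = 0"
  proof -
    have "(int p - int q) mod int n3 \<le> 0" using h by simp
    moreover have "0 \<le> (int p - int q) mod int n3" using n3 by simp
    ultimately show ?thesis by simp
  qed
  then have d: "int n3 dvd (int p - int q)" by (simp add: mod_eq_0_iff_dvd)
  show "p = q"
  proof (rule ccontr)
    assume "p \<noteq> q"
    then have "int p - int q \<noteq> 0" by simp
    from dvd_imp_le_int[OF this d] have "\<bar>int n3\<bar> \<le> \<bar>int p - int q\<bar>" .
    then show False using assms by simp
  qed
qed simp

lemma bz_id: "bcirc_z n n n3 (qt_id n n3) = 1\<^sub>m (n * n3)"
proof (rule eq_matI)
  fix r c assume r0: "r < dim_row (1\<^sub>m (n * n3) :: quat mat)" and c0: "c < dim_col (1\<^sub>m (n * n3) :: quat mat)"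
  then have r: "r < n * n3" and c: "c < n * n3" by auto
  have n: "n > 0" using r by (cases n) auto
  have rd: "r div n < n3" and cd: "c div n < n3" using div_lt r c by auto
  have s: "nat ((int (r div n) - int (c div n)) mod int n3) < n3"
    using rd by (simp add: nat_less_iff)
  have qid: "qt_id n n3 a b s = (if a = b \<and> s = 0 then 1 else 0)" if "a < n" "b < n" "s < n3" for a b s
    unfolding qt_id_def using that by auto
  have qjp0: "qjp (qt_id n n3 a b s) = 0" for a b s
    unfolding qt_id_def by simp
  have qd01: "qd (if P then 1 else 0) = (if P then 1 else 0)" for P by simp
  have rc: "r = c \<longleftrightarrow> (r mod n = c mod n \<and> r div n = c div n)"
  proof
    assume h: "r mod n = c mod n \<and> r div n = c div n"
    have "r = r div n * n + r mod n" by simp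
    also have "\<dots> = c div n * n + c mod n" using h by simp
    also have "\<dots> = c" by simp
    finally show "r = c" .
  qed simp
  have "bcirc_z n n n3 (qt_id n n3) $$ (r, c) =
     qd (qt_id n n3 (r mod n) (c mod n) (nat ((int (r div n) - int (c div n)) mod int n3)))"
    unfolding bz_entry[OF r c] qjp0 by simp
  also have "\<dots> = (if r mod n = c mod n \<and> nat ((int (r div n) - int (c div n)) mod int n3) = 0 then 1 else 0)"
    using n s by (simp only: qid[of "r mod n" "c mod n"] mod_less_divisor qd01)
  also have "\<dots> = (if r = c then 1 else 0)"
    using mod_zero_iff_eq[OF rd cd] rc by simp
  also have "\<dots> = 1\<^sub>m (n * n3) $$ (r, c)" using r c by simp
  finally show "bcirc_z n n n3 (qt_id n n3) $$ (r, c) = 1\<^sub>m (n * n3) $$ (r, c)" .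
next
  show "dim_row (bcirc_z n n n3 (qt_id n n3)) = dim_row (1\<^sub>m (n * n3) :: quat mat)"
    by (simp only: carrier_matD[OF bz_carrier] index_one_mat(2,3))
  show "dim_col (bcirc_z n n n3 (qt_id n n3)) = dim_col (1\<^sub>m (n * n3) :: quat mat)"
    by (simp only: carrier_matD[OF bz_carrier] index_one_mat(2,3))
qed

lemma pow_comm_mat:
  assumes M: "(M :: quat mat) \<in> carrier_mat N N"
  shows "M * M ^\<^sub>m k = M ^\<^sub>m k * M"
proof (induction k)
  case 0
  then show ?case using M by simp
next
  case (Suc k)
  have "M * M ^\<^sub>m Suc k = (M * M ^\<^sub>m k) * M"
    using M assoc_mult_mat[of M N N "M ^\<^sub>m k" N M N] by simp
  also have "\<dots> = M ^\<^sub>m Suc k * M" using Suc by simp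
  finally show ?case .
qed

lemma bz_pow: "bcirc_z n n n3 (qt_pow n n3 A k) = bcirc_z n n n3 A ^\<^sub>m k"
proof (induction k)
  case 0
  then show ?case using carrier_matD[OF bz_carrier[of n n3 A]] by (simp add: bz_id)
next
  case (Suc k)
  then show ?case using pow_comm_mat[OF bz_carrier[of n n3 A], of k] by (simp add: bz_mult_all)
qed

lemma mat_dz_unique:
  fixes M X Y :: "quat mat"
  assumes M: "M \<in> carrier_mat N N" and X: "X \<in> carrier_mat N N" and Y: "Y \<in> carrier_mat N N"
    and a1: "M * X = X * M" and a2: "X * M * X = X" and a3: "M ^\<^sub>m m * X * M = M ^\<^sub>m m"
    and b1: "M * Y = Y * M" and b2: "Y * M * Y = Y" and b3: "M ^\<^sub>m m * Y * M = M ^\<^sub>m m"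
  shows "X = Y"
proof -
  interpret G: semiring "ring_mat TYPE(quat) N ()" by (rule semiring_mat)
  have pw: "M ^\<^sub>m j = M [^]\<^bsub>ring_mat TYPE(quat) N ()\<^esub> j" for j by (rule pow_mat_ring_pow[OF M])
  show ?thesis
  proof (rule G.dz_unique[of M X Y m])
    show "M \<in> carrier (ring_mat TYPE(quat) N ())" "X \<in> carrier (ring_mat TYPE(quat) N ())"
      "Y \<in> carrier (ring_mat TYPE(quat) N ())" using M X Y by (simp_all only: ring_mat_simps)
    show "M \<otimes>\<^bsub>ring_mat TYPE(quat) N ()\<^esub> X = X \<otimes>\<^bsub>ring_mat TYPE(quat) N ()\<^esub> M"
      using a1 by (simp only: ring_mat_simps)
    show "X \<otimes>\<^bsub>ring_mat TYPE(quat) N ()\<^esub> M \<otimes>\<^bsub>ring_mat TYPE(quat) N ()\<^esub> X = X"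
      using a2 by (simp only: ring_mat_simps)
    show "M [^]\<^bsub>ring_mat TYPE(quat) N ()\<^esub> m \<otimes>\<^bsub>ring_mat TYPE(quat) N ()\<^esub> X \<otimes>\<^bsub>ring_mat TYPE(quat) N ()\<^esub> M = M [^]\<^bsub>ring_mat TYPE(quat) N ()\<^esub> m"
      using a3 by (simp only: ring_mat_simps pw[symmetric])
    show "M \<otimes>\<^bsub>ring_mat TYPE(quat) N ()\<^esub> Y = Y \<otimes>\<^bsub>ring_mat TYPE(quat) N ()\<^esub> M"
      using b1 by (simp only: ring_mat_simps)
    show "Y \<otimes>\<^bsub>ring_mat TYPE(quat) N ()\<^esub> M \<otimes>\<^bsub>ring_mat TYPE(quat) N ()\<^esub> Y = Y"
      using b2 by (simp only: ring_mat_simps)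
    show "M [^]\<^bsub>ring_mat TYPE(quat) N ()\<^esub> m \<otimes>\<^bsub>ring_mat TYPE(quat) N ()\<^esub> Y \<otimes>\<^bsub>ring_mat TYPE(quat) N ()\<^esub> M = M [^]\<^bsub>ring_mat TYPE(quat) N ()\<^esub> m"
      using b3 by (simp only: ring_mat_simps pw[symmetric])
  qed
qed

lemma mat_dz_shift:
  fixes M Y :: "quat mat"
  assumes M: "M \<in> carrier_mat N N" and Y: "Y \<in> carrier_mat N N"
    and a1: "M * Y = Y * M" and a2: "M ^\<^sub>m k * Y * M = M ^\<^sub>m k"
  shows "M ^\<^sub>m k = M ^\<^sub>m Suc k * Y"
proof -
  interpret G: semiring "ring_mat TYPE(quat) N ()" by (rule semiring_mat)
  have pw: "M ^\<^sub>m j = M [^]\<^bsub>ring_mat TYPE(quat) N ()\<^esub> j" for j by (rule pow_mat_ring_pow[OF M])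
  have "M [^]\<^bsub>ring_mat TYPE(quat) N ()\<^esub> k = M [^]\<^bsub>ring_mat TYPE(quat) N ()\<^esub> Suc k \<otimes>\<^bsub>ring_mat TYPE(quat) N ()\<^esub> Y"
  proof (rule G.dz_shift)
    show "M \<in> carrier (ring_mat TYPE(quat) N ())" "Y \<in> carrier (ring_mat TYPE(quat) N ())"
      using M Y by (simp_all only: ring_mat_simps)
    show "M \<otimes>\<^bsub>ring_mat TYPE(quat) N ()\<^esub> Y = Y \<otimes>\<^bsub>ring_mat TYPE(quat) N ()\<^esub> M"
      using a1 by (simp only: ring_mat_simps)
    show "M [^]\<^bsub>ring_mat TYPE(quat) N ()\<^esub> k \<otimes>\<^bsub>ring_mat TYPE(quat) N ()\<^esub> Y \<otimes>\<^bsub>ring_mat TYPE(quat) N ()\<^esub> M = M [^]\<^bsub>ring_mat TYPE(quat) N ()\<^esub> k"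
      using a2 by (simp only: ring_mat_simps pw[symmetric])
  qed
  then show ?thesis by (simp only: ring_mat_simps pw[symmetric])
qed

lemma mat_dz_lower:
  fixes M Y Z :: "quat mat"
  assumes M: "M \<in> carrier_mat N N" and Y: "Y \<in> carrier_mat N N" and Z: "Z \<in> carrier_mat N N"
    and a1: "M * Y = Y * M" and a2: "M ^\<^sub>m k * Y * M = M ^\<^sub>m k"
    and a3: "M ^\<^sub>m m = M ^\<^sub>m Suc m * Z" and a4: "m \<le> k"
  shows "M ^\<^sub>m m * Y * M = M ^\<^sub>m m"
proof -
  interpret G: semiring "ring_mat TYPE(quat) N ()" by (rule semiring_mat)
  have pw: "M ^\<^sub>m j = M [^]\<^bsub>ring_mat TYPE(quat) N ()\<^esub> j" for j by (rule pow_mat_ring_pow[OF M])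
  have "M [^]\<^bsub>ring_mat TYPE(quat) N ()\<^esub> m \<otimes>\<^bsub>ring_mat TYPE(quat) N ()\<^esub> Y \<otimes>\<^bsub>ring_mat TYPE(quat) N ()\<^esub> M = M [^]\<^bsub>ring_mat TYPE(quat) N ()\<^esub> m"
  proof (rule G.dz_lower[of M Y Z k])
    show "M \<in> carrier (ring_mat TYPE(quat) N ())" "Y \<in> carrier (ring_mat TYPE(quat) N ())"
      "Z \<in> carrier (ring_mat TYPE(quat) N ())" using M Y Z by (simp_all only: ring_mat_simps)
    show "M \<otimes>\<^bsub>ring_mat TYPE(quat) N ()\<^esub> Y = Y \<otimes>\<^bsub>ring_mat TYPE(quat) N ()\<^esub> M"
      using a1 by (simp only: ring_mat_simps)
    show "M [^]\<^bsub>ring_mat TYPE(quat) N ()\<^esub> k \<otimes>\<^bsub>ring_mat TYPE(quat) N ()\<^esub> Y \<otimes>\<^bsub>ring_mat TYPE(quat) N ()\<^esub> M = M [^]\<^bsub>ring_mat TYPE(quat) N ()\<^esub> k"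
      using a2 by (simp only: ring_mat_simps pw[symmetric])
    show "M [^]\<^bsub>ring_mat TYPE(quat) N ()\<^esub> m = M [^]\<^bsub>ring_mat TYPE(quat) N ()\<^esub> Suc m \<otimes>\<^bsub>ring_mat TYPE(quat) N ()\<^esub> Z"
      using a3 by (simp only: ring_mat_simps pw[symmetric])
    show "m \<le> k" by (rule a4)
  qed
  then show ?thesis by (simp only: ring_mat_simps pw[symmetric])
qed

theorem lemma3p5:
  fixes A X :: "quat tensor" and n n3 k :: nat
  assumes "A \<in> tensor_carrier n n n3"
    and "X \<in> tensor_carrier n n n3"
    and "qt_ind n n3 A = k"
    and "is_qt_drazin n n3 k A X"
  shows "qmat_drazin (bcirc_z n n n3 A) = bcirc_z n n n3 X"
proof -
  define N where "N = n * n3"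
  define M where "M = bcirc_z n n n3 A"
  define Y where "Y = bcirc_z n n n3 X"
  have M: "M \<in> carrier_mat N N" unfolding M_def N_def by (rule bz_carrier)
  have Y: "Y \<in> carrier_mat N N" unfolding Y_def N_def by (rule bz_carrier)
  have h1: "qt_prod n n n n3 (qt_prod n n n n3 (qt_pow n n3 A k) X) A = qt_pow n n3 A k"
    and h2: "qt_prod n n n n3 (qt_prod n n n n3 X A) X = X"
    and h3: "qt_prod n n n n3 A X = qt_prod n n n n3 X A"
    using assms(4) unfolding is_qt_drazin_def by auto
  have e1: "M ^\<^sub>m k * Y * M = M ^\<^sub>m k"
    using arg_cong[OF h1, of "bcirc_z n n n3"] unfolding bz_mult_all bz_pow M_def Y_def .
  have e2: "Y * M * Y = Y"
    using arg_cong[OF h2, of "bcirc_z n n n3"] unfolding bz_mult_all M_def Y_def .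
  have e3: "M * Y = Y * M"
    using arg_cong[OF h3, of "bcirc_z n n n3"] unfolding bz_mult_all M_def Y_def .
  have sh: "M ^\<^sub>m k = M ^\<^sub>m Suc k * Y" by (rule mat_dz_shift[OF M Y e3 e1])
  have Mk: "M ^\<^sub>m j \<in> carrier_mat N N" for j using M by simp
  define Pr where "Pr = (\<lambda>m. qmat_rank (M ^\<^sub>m (m + 1)) = qmat_rank (M ^\<^sub>m m))"
  have Pk: "Pr k"
  proof -
    have "qmat_rank (M ^\<^sub>m Suc k) \<le> qmat_rank (M ^\<^sub>m k)"
      using rank_mult_le[OF Mk M, of k] by simp
    moreover have "qmat_rank (M ^\<^sub>m k) \<le> qmat_rank (M ^\<^sub>m Suc k)"
      using rank_mult_le[OF Mk Y, of "Suc k"] by (simp only: sh[symmetric])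
    ultimately show ?thesis unfolding Pr_def by simp
  qed
  define m where "m = qmat_ind M"
  have m_def': "m = (LEAST m. Pr m)" unfolding m_def qmat_ind_def Pr_def ..
  have Pm: "Pr m" unfolding m_def' by (rule LeastI[of Pr k, OF Pk])
  have mk: "m \<le> k" unfolding m_def' by (rule Least_le[of Pr k, OF Pk])
  have "qmat_rank (M ^\<^sub>m m * M) = qmat_rank (M ^\<^sub>m m)" using Pm unfolding Pr_def by simp
  from rank_eq_factor[OF Mk M this] obtain Z where Z: "Z \<in> carrier_mat N N"
    and MZ: "M ^\<^sub>m m = M ^\<^sub>m m * M * Z" by blast
  have MZ': "M ^\<^sub>m m = M ^\<^sub>m Suc m * Z" unfolding pow_mat.simps(2) by (rule MZ)
  have em: "M ^\<^sub>m m * Y * M = M ^\<^sub>m m" by (rule mat_dz_lower[OF M Y Z e3 e1 MZ' mk])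
  have dr: "dim_row M = N" using M by simp
  have "qmat_drazin M = Y"
    unfolding qmat_drazin_def m_def[symmetric] dr
  proof (rule the_equality)
    show "Y \<in> carrier_mat N N \<and> M ^\<^sub>m m * Y * M = M ^\<^sub>m m \<and> Y * M * Y = Y \<and> M * Y = Y * M"
      using Y em e2 e3 by simp
  next
    fix X' assume X': "X' \<in> carrier_mat N N \<and> M ^\<^sub>m m * X' * M = M ^\<^sub>m m \<and> X' * M * X' = X' \<and> M * X' = X' * M"
    show "X' = Y"
      by (rule mat_dz_unique[OF M _ Y _ _ _ e3 e2 em]) (use X' in auto)
  qed
  then show ?thesis unfolding M_def Y_def .
qed

end
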